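(* Suppose Assumption 1 holds and let $0<\delta<1$. Let $J\subseteq\{1,\dots,q\}$ with $|J|\le q^*$ and $J_0\setminus J\neq\emptyset$, and let $v=\sum_{j\in J_0}v_j$ with $v_j\in V_j$ for $j\in J_0$. On the event $\mathcal E_{\delta,J\cup J_0}$, $$\|\hat\Pi_{J_0}v\|_n^2-\|\hat\Pi_Jv\|_n^2=\|v-\hat\Pi_Jv\|_n^2\ge\frac{1-\delta}{1+\delta}(1-\rho_{q^*}^2)\Big\|\sum_{j\in J_0\setminus J}v_j\Big\|_n^2.$$
   Context: Let $q\ge1$ and let $(Y,X)$ be a pair of random variables with $X=(X_1,\dots,X_q)^T$, each $X_j$ real-valued, and $Y=\sum_{j=1}^q f_j(X_j)+\epsilon$, where $f_j\in L^2(\mathbb P^{X_j})$, $\mathbb E[f_j(X_j)]=0$ for $j=1,\dots,q-1$, and $\epsilon$ is a centered Gaussian variable with variance $\sigma^2$, independent of $X$. The space $L^2(\mathbb P^X)$ carries the inner product $\langle g,h\rangle=\mathbb E[g(X)h(X)]$ and norm $\|g\|=\langle g,g\rangle^{1/2}$. Let $H_q=L^2(\mathbb P^{X_q})$ and $H_j=\{h\in L^2(\mathbb P^{X_j}):\mathbb E[h(X_j)]=0\}$ for $j<q$, viewed as subspaces of $L^2(\mathbb P^X)$ via $x\mapsto h(x_j)$; for $J\subseteq\{1,\dots,q\}$ let $H_J=\sum_{j\in J}H_j$ (with $H_\emptyset=\{0\}$). Let $J_0=\{j:\|f_j\|>0\}$, $s=|J_0|$, and let $q^*$ be an integer with $s\le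 q^*$. Let $\rho_{q^*}$ be the supremum of $\langle h_1,h_2\rangle/(\|h_1\|\|h_2\|)$ over all nonzero $h_1\in H_{J_1}$, $h_2\in H_{J_2}$ and all $J_1,J_2\subseteq\{1,\dots,q\}$ with $J_1\cap J_2=\emptyset$ and $|J_1|,|J_2|\le q^*$. Assumption 1 is the condition $\rho_{q^*}<1$. For each $j$, $V_j\subseteq H_j$ is a finite-dimensional linear subspace and $V_J=\sum_{j\in J}V_j$. $X^1,\dots,X^n$ are independent copies of $X$. The empirical norm is $\|h\|_n^2=\frac1n\sum_{i=1}^nh(X^i)^2$ for functions and $\|u\|_n^2=\frac1n\|u\|_2^2$ for $u\in\mathbb R^n$. $\hat\Pi_J$ is the orthogonal projection of $\mathbb R^n$ onto $\{(g(X^1),\dots,g(X^n))^T:g\in V_J\}$, and for a function $h$ we write $\hat\Pi_Jh=\hat\Pi_J(h(X^1),\dots,h(X^n))^T$. For $0<\delta<1$ and $J\subseteq\{1,\dots,q\}$, $\mathcal E_{\delta,J}$ is the event that $(1-\delta)\|g\|^2\le\|g\|_n^2\le(1+\delta)\|g\|^2$ for all $g\in V_J$. *)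

theory Defs
  imports "HOL-Probability.Probability"
begin

text \<open>Random vector X = (X_1,...,X_q), coordinates indexed by 1..q; a function on
  the sample space of X is a map (nat \<Rightarrow> real) \<Rightarrow> real.\<close>

definition Xvec :: "(nat \<Rightarrow> 'a \<Rightarrow> real) \<Rightarrow> 'a \<Rightarrow> (nat \<Rightarrow> real)" where
  "Xvec X \<omega> = (\<lambda>j. X j \<omega>)"

definition pinner :: "'a measure \<Rightarrow> (nat \<Rightarrow> 'a \<Rightarrow> real) \<Rightarrow> ((nat \<Rightarrow> real) \<Rightarrow> real)
    \<Rightarrow> ((nat \<Rightarrow> real) \<Rightarrow> real) \<Rightarrow> real" where
  "pinner M X g h = (\<integral>\<omega>. g (Xvec X \<omega>) * h (Xvec X \<omega>) \<partial>M)"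

definition pnorm :: "'a measure \<Rightarrow> (nat \<Rightarrow> 'a \<Rightarrow> real) \<Rightarrow> ((nat \<Rightarrow> real) \<Rightarrow> real) \<Rightarrow> real" where
  "pnorm M X g = sqrt (pinner M X g g)"

definition Hsp :: "'a measure \<Rightarrow> (nat \<Rightarrow> 'a \<Rightarrow> real) \<Rightarrow> nat \<Rightarrow> nat
    \<Rightarrow> ((nat \<Rightarrow> real) \<Rightarrow> real) set" where
  "Hsp M X q j = {g. \<exists>h. h \<in> borel_measurable borel
      \<and> integrable M (\<lambda>\<omega>. (h (X j \<omega>))\<^sup>2)
      \<and> (j < q \<longrightarrow> (\<integral>\<omega>. h (X j \<omega>) \<partial>M) = 0)
      \<and> g = (\<lambda>x. h (x j))}"

definition sumsp :: "(nat \<Rightarrow> ((nat \<Rightarrow> real) \<Rightarrow> real) set) \<Rightarrow> nat set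
    \<Rightarrow> ((nat \<Rightarrow> real) \<Rightarrow> real) set" where
  "sumsp S J = {(\<lambda>x. \<Sum>j\<in>J. g j x) | g. \<forall>j\<in>J. g j \<in> S j}"

definition rho :: "'a measure \<Rightarrow> (nat \<Rightarrow> 'a \<Rightarrow> real) \<Rightarrow> nat \<Rightarrow> nat \<Rightarrow> real" where
  "rho M X q qstar = Sup {pinner M X h1 h2 / (pnorm M X h1 * pnorm M X h2) | h1 h2 J1 J2.
      J1 \<subseteq> {1..q} \<and> J2 \<subseteq> {1..q} \<and> J1 \<inter> J2 = {} \<and> card J1 \<le> qstar \<and> card J2 \<le> qstar
      \<and> h1 \<in> sumsp (Hsp M X q) J1 \<and> h2 \<in> sumsp (Hsp M X q) J2
      \<and> pnorm M X h1 > 0 \<and> pnorm M X h2 > 0}"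

definition fin_dim_subspace :: "((nat \<Rightarrow> real) \<Rightarrow> real) set \<Rightarrow> bool" where
  "fin_dim_subspace S \<longleftrightarrow> (\<exists>B. finite B \<and> S = {(\<lambda>x. \<Sum>b\<in>B. c b * b x) | c. True})"

text \<open>Sample X^i, i ranging over the finite type 'n (n = CARD('n)).\<close>
definition evalv :: "('n::finite \<Rightarrow> (nat \<Rightarrow> real)) \<Rightarrow> ((nat \<Rightarrow> real) \<Rightarrow> real) \<Rightarrow> real ^ 'n" where
  "evalv xs g = (\<chi> i. g (xs i))"

definition emp_norm2_vec :: "real ^ 'n::finite \<Rightarrow> real" where
  "emp_norm2_vec u = (norm u)\<^sup>2 / real CARD('n)"

definition emp_norm2 :: "('n::finite \<Rightarrow> (nat \<Rightarrow> real)) \<Rightarrow> ((nat \<Rightarrow> real) \<Rightarrow> real) \<Rightarrow> real" where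
  "emp_norm2 xs g = (\<Sum>i\<in>UNIV. (g (xs i))\<^sup>2) / real CARD('n)"

definition orth_proj :: "(real ^ 'n::finite) set \<Rightarrow> real ^ 'n \<Rightarrow> real ^ 'n" where
  "orth_proj W u = (THE p. p \<in> W \<and> (\<forall>w\<in>W. (u - p) \<bullet> w = 0))"

definition PiJ :: "(nat \<Rightarrow> ((nat \<Rightarrow> real) \<Rightarrow> real) set) \<Rightarrow> ('n::finite \<Rightarrow> (nat \<Rightarrow> real))
    \<Rightarrow> nat set \<Rightarrow> real ^ 'n \<Rightarrow> real ^ 'n" where
  "PiJ V xs J = orth_proj (evalv xs ` sumsp V J)"

definition event_E :: "'a measure \<Rightarrow> (nat \<Rightarrow> 'a \<Rightarrow> real) \<Rightarrow> (nat \<Rightarrow> ((nat \<Rightarrow> real) \<Rightarrow> real) set)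
    \<Rightarrow> ('n::finite \<Rightarrow> (nat \<Rightarrow> real)) \<Rightarrow> real \<Rightarrow> nat set \<Rightarrow> bool" where
  "event_E M X V xs \<delta> J \<longleftrightarrow> (\<forall>g \<in> sumsp V J.
      (1 - \<delta>) * (pnorm M X g)\<^sup>2 \<le> emp_norm2 xs g \<and> emp_norm2 xs g \<le> (1 + \<delta>) * (pnorm M X g)\<^sup>2)"

end

theory Submission imports Defs begin

lemma fds_zero: "fin_dim_subspace S \<Longrightarrow> (\<lambda>x. 0) \<in> S"
  unfolding fin_dim_subspace_def
  by (auto intro!: exI[of _ "\<lambda>b. 0"])

lemma fds_diff:
  assumes "fin_dim_subspace S" "a \<in> S" "b \<in> S"
  shows "(\<lambda>x. a x - b x) \<in> S"
proof -
  obtain B where B: "finite B" "S = {(\<lambda>x. \<Sum>b\<in>B. c b * b x) | c. True}"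
    using assms(1) unfolding fin_dim_subspace_def by blast
  obtain c1 where c1: "a = (\<lambda>x. \<Sum>b\<in>B. c1 b * b x)" using assms(2) B by auto
  obtain c2 where c2: "b = (\<lambda>x. \<Sum>b\<in>B. c2 b * b x)" using assms(3) B by auto
  have "(\<lambda>x. a x - b x) = (\<lambda>x. \<Sum>b\<in>B. (c1 b - c2 b) * b x)"
    by (simp add: c1 c2 fun_eq_iff sum_subtractf[symmetric] algebra_simps)
  then show ?thesis using B by auto
qed

lemma fds_add:
  assumes "fin_dim_subspace S" "a \<in> S" "b \<in> S"
  shows "(\<lambda>x. a x + b x) \<in> S"
proof -
  obtain B where B: "finite B" "S = {(\<lambda>x. \<Sum>b\<in>B. c b * b x) | c. True}"
    using assms(1) unfolding fin_dim_subspace_def by blast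
  obtain c1 where c1: "a = (\<lambda>x. \<Sum>b\<in>B. c1 b * b x)" using assms(2) B by auto
  obtain c2 where c2: "b = (\<lambda>x. \<Sum>b\<in>B. c2 b * b x)" using assms(3) B by auto
  have "(\<lambda>x. a x + b x) = (\<lambda>x. \<Sum>b\<in>B. (c1 b + c2 b) * b x)"
    by (simp add: c1 c2 fun_eq_iff sum.distrib[symmetric] algebra_simps)
  then show ?thesis using B by auto
qed

lemma fds_scale:
  assumes "fin_dim_subspace S" "a \<in> S"
  shows "(\<lambda>x. t * a x) \<in> S"
proof -
  obtain B where B: "finite B" "S = {(\<lambda>x. \<Sum>b\<in>B. c b * b x) | c. True}"
    using assms(1) unfolding fin_dim_subspace_def by blast
  obtain c1 where c1: "a = (\<lambda>x. \<Sum>b\<in>B. c1 b * b x)" using assms(2) B by auto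
  have "(\<lambda>x. t * a x) = (\<lambda>x. \<Sum>b\<in>B. (t * c1 b) * b x)"
    by (simp add: c1 fun_eq_iff sum_distrib_left algebra_simps)
  then show ?thesis using B by auto
qed

lemma sumsp_diff:
  assumes "\<And>j. j \<in> K \<Longrightarrow> fin_dim_subspace (S j)" "g \<in> sumsp S K" "h \<in> sumsp S K"
  shows "(\<lambda>x. g x - h x) \<in> sumsp S K"
proof -
  obtain g1 where g1: "g = (\<lambda>x. \<Sum>j\<in>K. g1 j x)" "\<forall>j\<in>K. g1 j \<in> S j"
    using assms(2) unfolding sumsp_def by blast
  obtain h1 where h1: "h = (\<lambda>x. \<Sum>j\<in>K. h1 j x)" "\<forall>j\<in>K. h1 j \<in> S j"
    using assms(3) unfolding sumsp_def by blast
  have "\<forall>j\<in>K. (\<lambda>y. g1 j y - h1 j y) \<in> S j"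
    using g1 h1 assms(1) fds_diff by blast
  then show ?thesis unfolding sumsp_def mem_Collect_eq
    by (intro exI[of _ "\<lambda>j y. g1 j y - h1 j y"]) (simp add: g1 h1 sum_subtractf)
qed

lemma sumsp_add:
  assumes "\<And>j. j \<in> K \<Longrightarrow> fin_dim_subspace (S j)" "g \<in> sumsp S K" "h \<in> sumsp S K"
  shows "(\<lambda>x. g x + h x) \<in> sumsp S K"
proof -
  obtain g1 where g1: "g = (\<lambda>x. \<Sum>j\<in>K. g1 j x)" "\<forall>j\<in>K. g1 j \<in> S j"
    using assms(2) unfolding sumsp_def by blast
  obtain h1 where h1: "h = (\<lambda>x. \<Sum>j\<in>K. h1 j x)" "\<forall>j\<in>K. h1 j \<in> S j"
    using assms(3) unfolding sumsp_def by blast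
  have "\<forall>j\<in>K. (\<lambda>y. g1 j y + h1 j y) \<in> S j"
    using g1 h1 assms(1) fds_add by blast
  then show ?thesis unfolding sumsp_def mem_Collect_eq
    by (intro exI[of _ "\<lambda>j y. g1 j y + h1 j y"]) (simp add: g1 h1 sum.distrib)
qed

lemma sumsp_scale:
  assumes "\<And>j. j \<in> K \<Longrightarrow> fin_dim_subspace (S j)" "g \<in> sumsp S K"
  shows "(\<lambda>x. t * g x) \<in> sumsp S K"
proof -
  obtain g1 where g1: "g = (\<lambda>x. \<Sum>j\<in>K. g1 j x)" "\<forall>j\<in>K. g1 j \<in> S j"
    using assms(2) unfolding sumsp_def by blast
  have "\<forall>j\<in>K. (\<lambda>y. t * g1 j y) \<in> S j"
    using g1 assms(1) fds_scale by blast
  then show ?thesis unfolding sumsp_def mem_Collect_eq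
    by (intro exI[of _ "\<lambda>j y. t * g1 j y"]) (simp add: g1 sum_distrib_left)
qed

lemma sumsp_zero:
  assumes "\<And>j. j \<in> K \<Longrightarrow> fin_dim_subspace (S j)"
  shows "(\<lambda>x. 0) \<in> sumsp S K"
  unfolding sumsp_def using assms fds_zero
  by (auto intro!: exI[of _ "\<lambda>j x. 0"])

lemma sumsp_mono:
  assumes "K \<subseteq> L" "finite L" "\<And>j. j \<in> L \<Longrightarrow> (\<lambda>x. 0) \<in> S j" "g \<in> sumsp S K"
  shows "g \<in> sumsp S L"
proof -
  obtain g1 where g1: "g = (\<lambda>x. \<Sum>j\<in>K. g1 j x)" "\<forall>j\<in>K. g1 j \<in> S j"
    using assms(4) unfolding sumsp_def by blast
  define g2 where "g2 = (\<lambda>j. if j \<in> K then g1 j else (\<lambda>x. 0))"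
  have "\<And>x. (\<Sum>j\<in>L. g2 j x) = (\<Sum>j\<in>K. g2 j x)"
    by (rule sum.mono_neutral_right) (use assms in \<open>auto simp: g2_def\<close>)
  then have "g = (\<lambda>x. \<Sum>j\<in>L. g2 j x)" by (simp add: g1 g2_def)
  moreover have "\<forall>j\<in>L. g2 j \<in> S j" using g1 assms(3) by (auto simp: g2_def)
  ultimately show ?thesis unfolding sumsp_def by blast
qed

lemma sumsp_subset:
  assumes "\<And>j. j \<in> K \<Longrightarrow> S j \<subseteq> T j" "g \<in> sumsp S K"
  shows "g \<in> sumsp T K"
  using assms unfolding sumsp_def by blast

lemma evalv_diff: "evalv xs (\<lambda>x. g x - h x) = evalv xs g - evalv xs h"
  by (simp add: evalv_def vec_eq_iff)
lemma evalv_add: "evalv xs (\<lambda>x. g x + h x) = evalv xs g + evalv xs h"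
  by (simp add: evalv_def vec_eq_iff)
lemma evalv_scale: "evalv xs (\<lambda>x. t * g x) = t *\<^sub>R evalv xs g"
  by (simp add: evalv_def vec_eq_iff)
lemma evalv_zero: "evalv xs (\<lambda>x. 0) = 0"
  by (simp add: evalv_def vec_eq_iff)

lemma subspace_evalv:
  assumes "\<And>j. j \<in> K \<Longrightarrow> fin_dim_subspace (S j)"
  shows "subspace (evalv xs ` sumsp S K)"
  unfolding subspace_def
proof (intro conjI ballI allI)
  have "evalv xs (\<lambda>x. 0) \<in> evalv xs ` sumsp S K" by (rule imageI[OF sumsp_zero[OF assms]])
  then show "0 \<in> evalv xs ` sumsp S K" by (simp only: evalv_zero)
next
  fix x y assume "x \<in> evalv xs ` sumsp S K" "y \<in> evalv xs ` sumsp S K"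
  then obtain g h where gh: "g \<in> sumsp S K" "h \<in> sumsp S K" "x = evalv xs g" "y = evalv xs h" by auto
  have "evalv xs (\<lambda>x. g x + h x) \<in> evalv xs ` sumsp S K" by (rule imageI[OF sumsp_add[OF assms gh(1,2)]])
  then show "x + y \<in> evalv xs ` sumsp S K" by (simp only: evalv_add gh(3,4))
next
  fix c x assume "x \<in> evalv xs ` sumsp S K"
  then obtain g where g: "g \<in> sumsp S K" "x = evalv xs g" by auto
  have "evalv xs (\<lambda>x. c * g x) \<in> evalv xs ` sumsp S K" by (rule imageI[OF sumsp_scale[OF assms g(1)]])
  then show "c *\<^sub>R x \<in> evalv xs ` sumsp S K" by (simp only: evalv_scale g(2))
qed

lemma orth_proj_prop:
  assumes "subspace W"
  shows "orth_proj W u \<in> W \<and> (\<forall>w\<in>W. (u - orth_proj W u) \<bullet> w = 0)"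
proof -
  obtain y z where yz: "y \<in> span W" "\<And>w. w \<in> span W \<Longrightarrow> orthogonal z w" "u = y + z"
    by (rule orthogonal_subspace_decomp_exists[of W u]) auto
  have sW: "span W = W" using assms by (simp add: span_eq_iff)
  have ex1: "y \<in> W" using yz(1) unfolding sW .
  have ex2: "\<forall>w\<in>W. (u - y) \<bullet> w = 0"
  proof
    fix w assume "w \<in> W"
    then have "w \<in> span W" by (rule span_base)
    then have "orthogonal z w" by (rule yz(2))
    then show "(u - y) \<bullet> w = 0" by (simp add: yz(3) orthogonal_def)
  qed
  have uniq: "p = y" if "p \<in> W" "\<forall>w\<in>W. (u - p) \<bullet> w = 0" for p
  proof -
    have pyW: "p - y \<in> W" using that(1) ex1 assms by (rule subspace_diff[rotated 1, OF _ _]) 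
    have "(u - y) \<bullet> (p - y) = 0" using ex2 pyW by blast
    moreover have "(u - p) \<bullet> (p - y) = 0" using that(2) pyW by blast
    ultimately have "(p - y) \<bullet> (p - y) = 0" by (simp add: inner_diff_left)
    then show ?thesis by simp
  qed
  have "orth_proj W u = y" unfolding orth_proj_def
  proof (rule the_equality)
    show "y \<in> W \<and> (\<forall>w\<in>W. (u - y) \<bullet> w = 0)" using ex1 ex2 by simp
  next
    fix p assume "p \<in> W \<and> (\<forall>w\<in>W. (u - p) \<bullet> w = 0)"
    then show "p = y" using uniq by blast
  qed
  then show ?thesis using ex1 ex2 by simp
qed

lemma emp_evalv: "emp_norm2_vec (evalv xs g) = emp_norm2 xs g"
  unfolding emp_norm2_vec_def emp_norm2_def power2_norm_eq_inner inner_vec_def evalv_def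
  by (simp add: power2_eq_square)


definition L2f :: "'a measure \<Rightarrow> (nat \<Rightarrow> 'a \<Rightarrow> real) \<Rightarrow> ((nat \<Rightarrow> real) \<Rightarrow> real) \<Rightarrow> bool" where
  "L2f M X g \<longleftrightarrow> (\<lambda>\<omega>. g (Xvec X \<omega>)) \<in> borel_measurable M \<and> integrable M (\<lambda>\<omega>. (g (Xvec X \<omega>))\<^sup>2)"

lemma abs_prod_le_sq: "\<bar>(a::real) * b\<bar> \<le> \<bar>a\<^sup>2 + b\<^sup>2\<bar>"
proof -
  have "0 \<le> (\<bar>a\<bar> - \<bar>b\<bar>)\<^sup>2" by simp
  then have "2 * (\<bar>a\<bar> * \<bar>b\<bar>) \<le> a\<^sup>2 + b\<^sup>2"
    by (simp add: power2_eq_square algebra_simps)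
  moreover have "0 \<le> \<bar>a\<bar> * \<bar>b\<bar>" by simp
  ultimately have "\<bar>a\<bar> * \<bar>b\<bar> \<le> a\<^sup>2 + b\<^sup>2" by linarith
  moreover have "a\<^sup>2 + b\<^sup>2 \<le> \<bar>a\<^sup>2 + b\<^sup>2\<bar>" by (rule abs_ge_self)
  ultimately show ?thesis by (metis abs_mult order_trans)
qed

lemma L2f_prod:
  assumes "L2f M X g" "L2f M X h"
  shows "integrable M (\<lambda>\<omega>. g (Xvec X \<omega>) * h (Xvec X \<omega>))"
proof -
  have i: "integrable M (\<lambda>\<omega>. (g (Xvec X \<omega>))\<^sup>2 + (h (Xvec X \<omega>))\<^sup>2)"
    using assms unfolding L2f_def by auto
  have m: "(\<lambda>\<omega>. g (Xvec X \<omega>) * h (Xvec X \<omega>)) \<in> borel_measurable M"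
    using assms unfolding L2f_def by auto
  have ae: "AE \<omega> in M. norm (g (Xvec X \<omega>) * h (Xvec X \<omega>)) \<le> norm ((g (Xvec X \<omega>))\<^sup>2 + (h (Xvec X \<omega>))\<^sup>2)"
    using abs_prod_le_sq by (simp del: abs_mult)
  show ?thesis by (rule Bochner_Integration.integrable_bound[OF i m ae])
qed

lemma L2f_lin:
  assumes "L2f M X g" "L2f M X h"
  shows "L2f M X (\<lambda>x. g x + t * h x)"
proof -
  have m: "(\<lambda>\<omega>. g (Xvec X \<omega>) + t * h (Xvec X \<omega>)) \<in> borel_measurable M"
    using assms unfolding L2f_def by auto
  have i: "integrable M (\<lambda>\<omega>. (g (Xvec X \<omega>))\<^sup>2 + 2 * t * (g (Xvec X \<omega>) * h (Xvec X \<omega>)) + t\<^sup>2 * (h (Xvec X \<omega>))\<^sup>2)"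
    using assms L2f_prod[OF assms] unfolding L2f_def by auto
  have "(\<lambda>\<omega>. (g (Xvec X \<omega>) + t * h (Xvec X \<omega>))\<^sup>2) = (\<lambda>\<omega>. (g (Xvec X \<omega>))\<^sup>2 + 2 * t * (g (Xvec X \<omega>) * h (Xvec X \<omega>)) + t\<^sup>2 * (h (Xvec X \<omega>))\<^sup>2)"
    by (simp add: fun_eq_iff power2_eq_square algebra_simps)
  then show ?thesis using m i unfolding L2f_def by simp
qed

lemma L2f_zero: "L2f M X (\<lambda>x. 0)"
  unfolding L2f_def by simp

lemma L2f_add: "L2f M X g \<Longrightarrow> L2f M X h \<Longrightarrow> L2f M X (\<lambda>x. g x + h x)"
  using L2f_lin[of M X g h 1] by simp

lemma L2f_diff: "L2f M X g \<Longrightarrow> L2f M X h \<Longrightarrow> L2f M X (\<lambda>x. g x - h x)"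
  using L2f_lin[of M X g h "-1"] by simp

lemma L2f_sum:
  assumes "finite K" "\<And>j. j \<in> K \<Longrightarrow> L2f M X (g j)"
  shows "L2f M X (\<lambda>x. \<Sum>j\<in>K. g j x)"
  using assms
proof (induction K rule: finite_induct)
  case empty then show ?case by (simp add: L2f_zero)
next
  case (insert k K)
  then have "L2f M X (\<lambda>x. g k x + (\<Sum>j\<in>K. g j x))"
    using L2f_add[of M X "g k" "\<lambda>x. \<Sum>j\<in>K. g j x"] by auto
  then show ?case using insert by simp
qed

lemma pinner_expand:
  assumes "L2f M X g" "L2f M X h"
  shows "pinner M X (\<lambda>x. g x - t * h x) (\<lambda>x. g x - t * h x)
       = pinner M X g g - 2 * t * pinner M X g h + t\<^sup>2 * pinner M X h h"
proof -
  have igg: "integrable M (\<lambda>\<omega>. g (Xvec X \<omega>) * g (Xvec X \<omega>))" using L2f_prod[OF assms(1) assms(1)] .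
  have igh: "integrable M (\<lambda>\<omega>. g (Xvec X \<omega>) * h (Xvec X \<omega>))" using L2f_prod[OF assms(1) assms(2)] .
  have ihh: "integrable M (\<lambda>\<omega>. h (Xvec X \<omega>) * h (Xvec X \<omega>))" using L2f_prod[OF assms(2) assms(2)] .
  have "pinner M X (\<lambda>x. g x - t * h x) (\<lambda>x. g x - t * h x)
     = (\<integral>\<omega>. (g (Xvec X \<omega>) * g (Xvec X \<omega>) + t\<^sup>2 * (h (Xvec X \<omega>) * h (Xvec X \<omega>)))
             - (2 * t) * (g (Xvec X \<omega>) * h (Xvec X \<omega>)) \<partial>M)"
    unfolding pinner_def
    by (rule Bochner_Integration.integral_cong) (auto simp: power2_eq_square algebra_simps)
  also have "\<dots> = pinner M X g g - 2 * t * pinner M X g h + t\<^sup>2 * pinner M X h h"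
    unfolding pinner_def using igg igh ihh by simp
  finally show ?thesis .
qed

lemma pinner_nonneg: "0 \<le> pinner M X g g"
  unfolding pinner_def by (rule Bochner_Integration.integral_nonneg) simp

lemma pnorm_sq: "(pnorm M X g)\<^sup>2 = pinner M X g g"
  unfolding pnorm_def using pinner_nonneg by simp

lemma cauchy_schwarz_pinner:
  assumes "L2f M X g" "L2f M X h"
  shows "(pinner M X g h)\<^sup>2 \<le> pinner M X g g * pinner M X h h"
proof -
  define A B c where "A = pinner M X g g" "B = pinner M X h h" "c = pinner M X g h"
  have q: "0 \<le> A - 2 * t * c + t\<^sup>2 * B" for t
    using pinner_expand[OF assms, of t] pinner_nonneg[of M X "\<lambda>x. g x - t * h x"]
    by (simp add: A_B_c_def)
  have B0: "0 \<le> B" using pinner_nonneg by (simp add: A_B_c_def)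
  show ?thesis
  proof (cases "B = 0")
    case True
    have "c = 0"
    proof (rule ccontr)
      assume "c \<noteq> 0"
      have "0 \<le> A - 2 * ((A + 1) / (2 * c)) * c" using q[of "(A + 1) / (2 * c)"] True by simp
      also have "\<dots> = -1" using \<open>c \<noteq> 0\<close> by (simp add: field_simps)
      finally show False by simp
    qed
    then show ?thesis using True by (simp add: A_B_c_def[symmetric])
  next
    case False
    then have Bp: "B > 0" using B0 by simp
    have "0 \<le> A - 2 * (c / B) * c + (c / B)\<^sup>2 * B" using q .
    also have "\<dots> = A - c\<^sup>2 / B" using Bp by (simp add: field_simps power2_eq_square)
    finally have "c\<^sup>2 / B \<le> A" by simp
    then have "c\<^sup>2 \<le> A * B" using Bp by (simp add: divide_le_eq)
    then show ?thesis by (simp add: A_B_c_def)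
  qed
qed

lemma pinner_le_pnorm:
  assumes "L2f M X g" "L2f M X h"
  shows "pinner M X g h \<le> pnorm M X g * pnorm M X h"
proof -
  have "pinner M X g h \<le> sqrt ((pinner M X g h)\<^sup>2)" by simp
  also have "\<dots> \<le> sqrt (pinner M X g g * pinner M X h h)"
    using cauchy_schwarz_pinner[OF assms] by (rule real_sqrt_le_mono)
  also have "\<dots> = pnorm M X g * pnorm M X h" unfolding pnorm_def by (simp add: real_sqrt_mult)
  finally show ?thesis .
qed

lemma corr_ineq:
  assumes "L2f M X g" "L2f M X h"
    and r: "pnorm M X g > 0 \<Longrightarrow> pnorm M X h > 0 \<Longrightarrow> pinner M X g h / (pnorm M X g * pnorm M X h) \<le> r"
  shows "(1 - r\<^sup>2) * (pnorm M X g)\<^sup>2 \<le> pinner M X (\<lambda>x. g x - h x) (\<lambda>x. g x - h x)"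
proof -
  define a b c where "a = pnorm M X g" "b = pnorm M X h" "c = pinner M X g h"
  have e: "pinner M X (\<lambda>x. g x - h x) (\<lambda>x. g x - h x) = a\<^sup>2 - 2 * c + b\<^sup>2"
    using pinner_expand[OF assms(1,2), of 1] by (simp add: a_b_c_def pnorm_sq)
  have a0: "a \<ge> 0" "b \<ge> 0" unfolding a_b_c_def pnorm_def by (simp_all add: pinner_nonneg)
  have cs: "c\<^sup>2 \<le> a\<^sup>2 * b\<^sup>2" using cauchy_schwarz_pinner[OF assms(1,2)] by (simp add: a_b_c_def pnorm_sq)
  show ?thesis
  proof (cases "a = 0")
    case True
    then have "(1 - r\<^sup>2) * (pnorm M X g)\<^sup>2 = 0" by (simp add: a_b_c_def)
    then show ?thesis using pinner_nonneg[of M X "\<lambda>x. g x - h x"] by linarith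
  next
    case an: False
    show ?thesis
    proof (cases "b = 0")
      case True
      then have "c = 0" using cs by simp
      then show ?thesis unfolding e using True by (simp add: a_b_c_def[symmetric] algebra_simps)
    next
      case False
      then have ab: "a > 0" "b > 0" using an a0 by auto
      then have "c / (a * b) \<le> r" using r by (simp add: a_b_c_def)
      then have "c \<le> r * (a * b)" using ab by (simp add: divide_le_eq)
      moreover have "0 \<le> (b - r * a)\<^sup>2" by simp
      ultimately have "(1 - r\<^sup>2) * a\<^sup>2 \<le> a\<^sup>2 - 2 * c + b\<^sup>2"
        by (simp add: power2_eq_square algebra_simps)
      then show ?thesis unfolding e by (simp add: a_b_c_def)
    qed
  qed
qed

lemma L2f_Hsp:
  assumes "X j \<in> borel_measurable M" "g \<in> Hsp M X q j"
  shows "L2f M X g"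
proof -
  obtain h where h: "h \<in> borel_measurable borel" "integrable M (\<lambda>\<omega>. (h (X j \<omega>))\<^sup>2)" "g = (\<lambda>x. h (x j))"
    using assms(2) unfolding Hsp_def by blast
  have "(\<lambda>\<omega>. h (X j \<omega>)) \<in> borel_measurable M"
    using measurable_compose[OF assms(1) h(1)] .
  then show ?thesis using h unfolding L2f_def Xvec_def by simp
qed

lemma L2f_sumsp_Hsp:
  assumes "K \<subseteq> {1..q}" "\<And>j. j \<in> {1..q} \<Longrightarrow> X j \<in> borel_measurable M" "g \<in> sumsp (Hsp M X q) K"
  shows "L2f M X g"
proof -
  obtain g1 where g1: "g = (\<lambda>x. \<Sum>j\<in>K. g1 j x)" "\<forall>j\<in>K. g1 j \<in> Hsp M X q j"
    using assms(3) unfolding sumsp_def by blast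
  have "finite K" using assms(1) finite_subset by blast
  then show ?thesis unfolding g1(1)
    by (rule L2f_sum) (use g1 assms L2f_Hsp in blast)
qed

theorem proposition5:
  fixes M :: "'a measure" and X :: "nat \<Rightarrow> 'a \<Rightarrow> real" and q qstar :: nat
    and f :: "nat \<Rightarrow> real \<Rightarrow> real" and J0 :: "nat set"
    and V :: "nat \<Rightarrow> ((nat \<Rightarrow> real) \<Rightarrow> real) set"
    and xs :: "'n::finite \<Rightarrow> (nat \<Rightarrow> real)"
    and \<delta> :: real and J :: "nat set" and vv :: "nat \<Rightarrow> (nat \<Rightarrow> real) \<Rightarrow> real"
  assumes P: "prob_space M"
    and q: "q \<ge> 1"
    and Xmeas: "\<And>j. j \<in> {1..q} \<Longrightarrow> X j \<in> borel_measurable M"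
    and f_meas: "\<And>j. j \<in> {1..q} \<Longrightarrow> f j \<in> borel_measurable borel"
    and f_L2: "\<And>j. j \<in> {1..q} \<Longrightarrow> integrable M (\<lambda>\<omega>. (f j (X j \<omega>))\<^sup>2)"
    and f_centered: "\<And>j. j \<in> {1..q} \<Longrightarrow> j < q \<Longrightarrow> (\<integral>\<omega>. f j (X j \<omega>) \<partial>M) = 0"
    and J0_def: "J0 = {j \<in> {1..q}. pnorm M X (\<lambda>x. f j (x j)) > 0}"
    and s_le: "card J0 \<le> qstar"
    and assumption1: "rho M X q qstar < 1"
    and V_sub: "\<And>j. j \<in> {1..q} \<Longrightarrow> V j \<subseteq> Hsp M X q j"
    and V_fd: "\<And>j. j \<in> {1..q} \<Longrightarrow> fin_dim_subspace (V j)"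
    and \<delta>: "0 < \<delta>" "\<delta> < 1"
    and J: "J \<subseteq> {1..q}" "card J \<le> qstar" "J0 - J \<noteq> {}"
    and vv: "\<And>j. j \<in> J0 \<Longrightarrow> vv j \<in> V j"
    and event: "event_E M X V xs \<delta> (J \<union> J0)"
  shows "let v = evalv xs (\<lambda>x. \<Sum>j\<in>J0. vv j x) in
      emp_norm2_vec (PiJ V xs J0 v) - emp_norm2_vec (PiJ V xs J v) = emp_norm2_vec (v - PiJ V xs J v)
    \<and> emp_norm2_vec (v - PiJ V xs J v)
        \<ge> (1 - \<delta>) / (1 + \<delta>) * (1 - (rho M X q qstar)\<^sup>2) * emp_norm2 xs (\<lambda>x. \<Sum>j\<in>J0 - J. vv j x)"
proof -
  define v where "v = evalv xs (\<lambda>x. \<Sum>j\<in>J0. vv j x)"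
  have J0sub: "J0 \<subseteq> {1..q}" using J0_def by auto
  have finJ0: "finite J0" using J0sub finite_subset by blast
  have finJ: "finite J" using J(1) finite_subset by blast
  define L where "L = J \<union> J0"
  have finL: "finite L" using finJ finJ0 by (simp add: L_def)
  have fdsL: "\<And>j. j \<in> L \<Longrightarrow> fin_dim_subspace (V j)" using V_fd J(1) J0sub by (auto simp: L_def)
  have fdsJ: "\<And>j. j \<in> J \<Longrightarrow> fin_dim_subspace (V j)" using fdsL by (auto simp: L_def)
  have fdsJ0: "\<And>j. j \<in> J0 \<Longrightarrow> fin_dim_subspace (V j)" using fdsL by (auto simp: L_def)
  have zL: "\<And>j. j \<in> L \<Longrightarrow> (\<lambda>x. 0) \<in> V j" using fdsL fds_zero by blast
  have v0: "(\<lambda>x. \<Sum>j\<in>J0. vv j x) \<in> sumsp V J0"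
    unfolding sumsp_def mem_Collect_eq by (intro exI[of _ vv]) (use vv in simp)
  define W0 where "W0 = evalv xs ` sumsp V J0"
  have sW0: "subspace W0" unfolding W0_def by (rule subspace_evalv[OF fdsJ0])
  have vW0: "v \<in> W0" using v0 by (simp add: v_def W0_def)
  have P0: "PiJ V xs J0 v = v"
  proof -
    define p where "p = orth_proj W0 v"
    have pp: "p \<in> W0" "\<forall>w\<in>W0. (v - p) \<bullet> w = 0"
      using orth_proj_prop[OF sW0, of v] by (simp_all add: p_def)
    have "v - p \<in> W0" using pp vW0 sW0 subspace_diff by blast
    then have "(v - p) \<bullet> (v - p) = 0" using pp by blast
    then have "p = v" by simp
    then show ?thesis by (simp add: PiJ_def W0_def p_def)
  qed
  define WJ where "WJ = evalv xs ` sumsp V J"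
  have sWJ: "subspace WJ" unfolding WJ_def by (rule subspace_evalv[OF fdsJ])
  define P where "P = PiJ V xs J v"
  have PP: "P \<in> WJ" "\<forall>w\<in>WJ. (v - P) \<bullet> w = 0"
    using orth_proj_prop[OF sWJ, of v] by (simp_all add: P_def PiJ_def WJ_def)
  have vP: "v \<bullet> P = P \<bullet> P" using PP(2) PP(1) by (simp add: inner_diff_left)
  have pyth: "(norm (v - P))\<^sup>2 = (norm v)\<^sup>2 - (norm P)\<^sup>2"
    unfolding power2_norm_eq_inner using vP
    by (simp add: inner_diff_left inner_diff_right inner_commute)
  have A: "emp_norm2_vec (PiJ V xs J0 v) - emp_norm2_vec (PiJ V xs J v) = emp_norm2_vec (v - PiJ V xs J v)"
    unfolding P0 P_def[symmetric] emp_norm2_vec_def pyth by (simp add: diff_divide_distrib)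
  obtain g where g: "g \<in> sumsp V J" "P = evalv xs g" using PP(1) by (auto simp: WJ_def)
  obtain gj where gj: "g = (\<lambda>x. \<Sum>j\<in>J. gj j x)" "\<forall>j\<in>J. gj j \<in> V j"
    using g(1) unfolding sumsp_def by blast
  define h1 where "h1 = (\<lambda>x. \<Sum>j\<in>J0 - J. vv j x)"
  define h2 where "h2 = (\<lambda>x. \<Sum>j\<in>J. gj j x - (if j \<in> J0 then vv j x else 0))"
  define d where "d = (\<lambda>x. h1 x - h2 x)"
  have d_eq: "d = (\<lambda>x. (\<Sum>j\<in>J0. vv j x) - g x)"
  proof
    fix x
    have "(\<Sum>j\<in>J. gj j x - (if j \<in> J0 then vv j x else 0))
        = (\<Sum>j\<in>J. gj j x) - (\<Sum>j\<in>J. (if j \<in> J0 then vv j x else 0))"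
      by (rule sum_subtractf)
    also have "(\<Sum>j\<in>J. (if j \<in> J0 then vv j x else 0)) = (\<Sum>j\<in>J0 \<inter> J. vv j x)"
      using sum.inter_restrict[OF finJ, of "\<lambda>j. vv j x" J0] by (simp add: Int_commute)
    finally have e2: "h2 x = g x - (\<Sum>j\<in>J0 \<inter> J. vv j x)" by (simp add: h2_def gj(1))
    have e0: "(\<Sum>j\<in>J0. vv j x) = (\<Sum>j\<in>J0 \<inter> J. vv j x) + h1 x"
      unfolding h1_def by (rule sum.Int_Diff[OF finJ0])
    show "d x = (\<Sum>j\<in>J0. vv j x) - g x" unfolding d_def e2 e0 by simp
  qed
  have vPd: "v - P = evalv xs d" unfolding d_eq v_def g(2) by (rule evalv_diff[symmetric])
  have v0L: "(\<lambda>x. \<Sum>j\<in>J0. vv j x) \<in> sumsp V L"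
    by (rule sumsp_mono[OF _ finL zL v0]) (auto simp: L_def)
  have gL: "g \<in> sumsp V L"
    by (rule sumsp_mono[OF _ finL zL g(1)]) (auto simp: L_def)
  have dL: "d \<in> sumsp V L" unfolding d_eq by (rule sumsp_diff[OF fdsL v0L gL])
  have h1_0: "h1 \<in> sumsp V (J0 - J)" unfolding sumsp_def h1_def mem_Collect_eq
    by (intro exI[of _ vv]) (use vv in simp)
  have h1L: "h1 \<in> sumsp V L" by (rule sumsp_mono[OF _ finL zL h1_0]) (auto simp: L_def)
  have h2J: "h2 \<in> sumsp V J"
  proof -
    have "\<forall>j\<in>J. (\<lambda>y. gj j y - (if j \<in> J0 then vv j y else 0)) \<in> V j"
    proof
      fix j assume jJ: "j \<in> J"
      show "(\<lambda>y. gj j y - (if j \<in> J0 then vv j y else 0)) \<in> V j"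
      proof (cases "j \<in> J0")
        case True then show ?thesis using fds_diff[OF fdsJ[OF jJ]] gj(2) vv jJ by simp
      next
        case False then show ?thesis using gj(2) jJ by simp
      qed
    qed
    then show ?thesis unfolding sumsp_def mem_Collect_eq h2_def
      by (intro exI[of _ "\<lambda>j y. gj j y - (if j \<in> J0 then vv j y else 0)"]) simp
  qed
  have h1H: "h1 \<in> sumsp (Hsp M X q) (J0 - J)"
  proof (rule sumsp_subset[OF _ h1_0])
    fix j assume "j \<in> J0 - J"
    then have "j \<in> {1..q}" using J0sub by blast
    then show "V j \<subseteq> Hsp M X q j" by (rule V_sub)
  qed
  have h2H: "h2 \<in> sumsp (Hsp M X q) J"
  proof (rule sumsp_subset[OF _ h2J])
    fix j assume "j \<in> J"
    then have "j \<in> {1..q}" using J(1) by blast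
    then show "V j \<subseteq> Hsp M X q j" by (rule V_sub)
  qed
  have L1: "L2f M X h1" by (rule L2f_sumsp_Hsp[OF _ Xmeas h1H]) (use J0sub in auto)
  have L2: "L2f M X h2" by (rule L2f_sumsp_Hsp[OF _ Xmeas h2H]) (use J(1) in auto)
  define RS where "RS = {pinner M X h1 h2 / (pnorm M X h1 * pnorm M X h2) | h1 h2 J1 J2.
      J1 \<subseteq> {1..q} \<and> J2 \<subseteq> {1..q} \<and> J1 \<inter> J2 = {} \<and> card J1 \<le> qstar \<and> card J2 \<le> qstar
      \<and> h1 \<in> sumsp (Hsp M X q) J1 \<and> h2 \<in> sumsp (Hsp M X q) J2
      \<and> pnorm M X h1 > 0 \<and> pnorm M X h2 > 0}"
  have rho_eq: "rho M X q qstar = Sup RS" unfolding rho_def RS_def ..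
  have bdd: "bdd_above RS"
  proof (rule bdd_aboveI)
    fix y assume "y \<in> RS"
    then obtain k1 k2 J1 J2 where k: "y = pinner M X k1 k2 / (pnorm M X k1 * pnorm M X k2)"
      "J1 \<subseteq> {1..q}" "J2 \<subseteq> {1..q}" "k1 \<in> sumsp (Hsp M X q) J1" "k2 \<in> sumsp (Hsp M X q) J2"
      "pnorm M X k1 > 0" "pnorm M X k2 > 0"
      unfolding RS_def mem_Collect_eq by metis
    have "L2f M X k1" by (rule L2f_sumsp_Hsp[OF k(2) Xmeas k(4)])
    moreover have "L2f M X k2" by (rule L2f_sumsp_Hsp[OF k(3) Xmeas k(5)])
    ultimately have "pinner M X k1 k2 \<le> pnorm M X k1 * pnorm M X k2" by (rule pinner_le_pnorm)
    then show "y \<le> 1" using k(1,6,7) by (simp add: divide_le_eq)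
  qed
  have rbound: "pinner M X h1 h2 / (pnorm M X h1 * pnorm M X h2) \<le> rho M X q qstar"
    if "pnorm M X h1 > 0" "pnorm M X h2 > 0"
  proof -
    have "card (J0 - J) \<le> qstar" using card_mono[OF finJ0, of "J0 - J"] s_le by auto
    moreover have "J0 - J \<subseteq> {1..q}" "(J0 - J) \<inter> J = {}" using J0sub by auto
    ultimately have "pinner M X h1 h2 / (pnorm M X h1 * pnorm M X h2) \<in> RS"
      unfolding RS_def mem_Collect_eq using J h1H h2H that
      by (intro exI[of _ h1] exI[of _ h2] exI[of _ "J0 - J"] exI[of _ J]) simp
    then show ?thesis unfolding rho_eq using bdd by (rule cSup_upper)
  qed
  have key: "(1 - (rho M X q qstar)\<^sup>2) * (pnorm M X h1)\<^sup>2 \<le> pinner M X d d"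
    unfolding d_def by (rule corr_ineq[OF L1 L2 rbound])
  have ev: "\<And>f. f \<in> sumsp V L \<Longrightarrow> (1 - \<delta>) * (pnorm M X f)\<^sup>2 \<le> emp_norm2 xs f \<and> emp_norm2 xs f \<le> (1 + \<delta>) * (pnorm M X f)\<^sup>2"
    using event unfolding event_E_def L_def by blast
  have Ed: "(1 - \<delta>) * pinner M X d d \<le> emp_norm2 xs d" using ev[OF dL] by (simp add: pnorm_sq)
  have Eh1: "emp_norm2 xs h1 \<le> (1 + \<delta>) * (pnorm M X h1)\<^sup>2" using ev[OF h1L] by simp
  have Eh1nn: "0 \<le> emp_norm2 xs h1" unfolding emp_norm2_def by (simp add: sum_nonneg)
  have Ednn: "0 \<le> emp_norm2 xs d" unfolding emp_norm2_def by (simp add: sum_nonneg)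
  have LHS: "emp_norm2_vec (v - PiJ V xs J v) = emp_norm2 xs d"
    unfolding P_def[symmetric] vPd by (rule emp_evalv)
  define \<rho> where "\<rho> = rho M X q qstar"
  have B: "emp_norm2_vec (v - PiJ V xs J v)
        \<ge> (1 - \<delta>) / (1 + \<delta>) * (1 - \<rho>\<^sup>2) * emp_norm2 xs h1"
  proof (cases "1 - \<rho>\<^sup>2 \<le> 0")
    case True
    have "(1 - \<delta>) / (1 + \<delta>) * (1 - \<rho>\<^sup>2) * emp_norm2 xs h1 \<le> 0"
      using True \<delta> Eh1nn by (intro mult_nonpos_nonneg mult_nonneg_nonpos) auto
    then show ?thesis using LHS Ednn by simp
  next
    case False
    define k where "k = (1 - \<delta>) * (1 - \<rho>\<^sup>2)"
    have k0: "0 \<le> k" using False \<delta> by (simp add: k_def)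
    have "emp_norm2 xs h1 / (1 + \<delta>) \<le> (pnorm M X h1)\<^sup>2" using Eh1 \<delta> by (simp add: divide_le_eq mult.commute)
    then have "k * (emp_norm2 xs h1 / (1 + \<delta>)) \<le> k * (pnorm M X h1)\<^sup>2" using k0 by (rule mult_left_mono)
    also have "\<dots> \<le> (1 - \<delta>) * pinner M X d d"
      using mult_left_mono[OF key, of "1 - \<delta>"] \<delta> by (simp add: k_def \<rho>_def mult.assoc)
    also have "\<dots> \<le> emp_norm2 xs d" by (rule Ed)
    finally show ?thesis using LHS by (simp add: k_def)
  qed
  show ?thesis unfolding Let_def v_def[symmetric] using A B by (simp add: h1_def \<rho>_def)
qed

end
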